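(* Let $n > m \geq 2$ be integers, let $X$ be a random variable taking values in $\mathcal{X}=\{x_1,\ldots,x_n\}$ with $P\{X=x_i\}=p_i$, where $\mathbf{p}=(p_1,\ldots,p_n)$ satisfies $p_1\geq p_2\geq\cdots\geq p_n\geq 0$ and $\sum_i p_i=1$. Then $$\max_{f\in\mathcal{F}_m} H(f(X)) \in \big[\,H(R_m(\mathbf{p}))-\alpha,\; H(R_m(\mathbf{p}))\,\big], \qquad \text{where } \alpha = 1-\frac{1+\ln(\ln 2)}{\ln 2}<0.08608,$$ and $$\min_{f\in\mathcal{F}_m} H(f(X)) = H(Q_m(\mathbf{p})).$$
   Context: $H$ denotes Shannon entropy in bits: for a probability vector $\mathbf{a}=(a_1,\ldots,a_t)$, $H(\mathbf{a})=-\sum_i a_i\log_2 a_i$ with $0\log 0=0$; $\ln$ is the natural logarithm. $\mathcal{Y}_m=\{y_1,\ldots,y_m\}$ is a set of $m$ elements and $\mathcal{F}_m$ is the set of all surjective functions $f:\mathcal{X}\to\mathcal{Y}_m$. Definition of $R_m(\mathbf{p})=(r_1,\ldots,r_m)$ for $\mathbf{p}$ sorted nonincreasingly: if $p_1<1/m$, then $R_m(\mathbf{p})=(1/m,\ldots,1/m)$. If $p_1\geq 1/m$, let $i^*$ be the maximum index $i\in\{1,\ldots,m-1\}$ such that $p_i\geq \frac{\sum_{j=i+1}^n p_j}{m-i}$. Then set $r_i=p_i$ for $i=1,\ldots,i^*$ and $r_i=\frac{\sum_{j=i^*+1}^n p_j}{m-i^*}$ for $i=i^*+1,\ldots,m$.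 Definition of $Q_m(\mathbf{p})=(q_1,\ldots,q_m)$: $q_1=\sum_{k=1}^{n-m+1}p_k$ and $q_i=p_{n-m+i}$ for $i=2,\ldots,m$. *)

theory Defs
  imports "HOL-Library.FuncSet" Complex_Main
begin

definition entropy :: "nat set \<Rightarrow> (nat \<Rightarrow> real) \<Rightarrow> real" where
  "entropy I a = - (\<Sum>i\<in>I. if a i = 0 then 0 else a i * log 2 (a i))"

text \<open>X takes value x_i (i = 1..n) with probability p i; Y_m = {y_1..y_m} is indexed by {1..m}.
  A function f : X \<rightarrow> Y_m is represented by its index map {1..n} \<rightarrow> {1..m}.\<close>
definition surj_funs :: "nat \<Rightarrow> nat \<Rightarrow> (nat \<Rightarrow> nat) set" where
  "surj_funs n m = {f. f \<in> {1..n} \<rightarrow>\<^sub>E {1..m} \<and> f ` {1..n} = {1..m}}"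

definition img_dist :: "nat \<Rightarrow> (nat \<Rightarrow> real) \<Rightarrow> (nat \<Rightarrow> nat) \<Rightarrow> nat \<Rightarrow> real" where
  "img_dist n p f j = (\<Sum>i\<in>{i\<in>{1..n}. f i = j}. p i)"

definition istar :: "nat \<Rightarrow> nat \<Rightarrow> (nat \<Rightarrow> real) \<Rightarrow> nat" where
  "istar n m p = Max {i\<in>{1..m-1}. p i \<ge> (\<Sum>j=i+1..n. p j) / real (m - i)}"

definition R_vec :: "nat \<Rightarrow> nat \<Rightarrow> (nat \<Rightarrow> real) \<Rightarrow> nat \<Rightarrow> real" where
  "R_vec n m p i =
     (if p 1 < 1 / real m then 1 / real m
      else if i \<le> istar n m p then p i
      else (\<Sum>j=istar n m p+1..n. p j) / real (m - istar n m p))"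

definition Q_vec :: "nat \<Rightarrow> nat \<Rightarrow> (nat \<Rightarrow> real) \<Rightarrow> nat \<Rightarrow> real" where
  "Q_vec n m p i = (if i = 1 then (\<Sum>k=1..n-m+1. p k) else p (n - m + i))"

end

theory Submission
  imports Defs "HOL-Analysis.Harmonic_Numbers"
begin


definition phi :: "real \<Rightarrow> real" where "phi x = (if x = 0 then 0 else - x * log 2 x)"
definition DD :: "real \<Rightarrow> real" where "DD x = - (log 2 x + 1 / ln 2)"


lemma L1_core:
  assumes "0 \<le> u" "u \<le> v" "0 < v"
  shows "phi v - phi u \<ge> (v - u) * DD v"
proof (cases "u = 0")
  case True
  then show ?thesis using assms by (simp add: phi_def DD_def algebra_simps)
next
  case False
  hence u: "u > 0" using assms by simp
  have "ln (v/u) \<le> v/u - 1" using u assms by (intro ln_le_minus_one) simp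
  hence "u * ln (v/u) \<le> u * (v/u - 1)" using u by (intro mult_left_mono) auto
  hence h: "u * (ln v - ln u) \<le> v - u" using u assms by (simp add: ln_div algebra_simps)
  have "ln 2 > (0::real)" by simp
  have "(phi v - phi u) * ln 2 - (v - u) * DD v * ln 2 = u * ln u - u * ln v + v - u"
    using u assms by (simp add: phi_def DD_def log_def field_simps)
  also have "\<dots> \<ge> 0" using h by (simp add: algebra_simps)
  finally have "((phi v - phi u) - (v - u) * DD v) * ln 2 \<ge> 0" by (simp add: algebra_simps)
  then show ?thesis using \<open>ln 2 > 0\<close> by (simp add: zero_le_mult_iff)
qed

lemma DD_anti: "0 < x \<Longrightarrow> x \<le> y \<Longrightarrow> DD y \<le> DD x"
  by (simp add: DD_def)

lemma L1:
  assumes "0 \<le> u" "u \<le> v" "v \<le> Z" "0 < Z"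
  shows "phi v - phi u \<ge> (v - u) * DD Z"
proof (cases "v = u")
  case True then show ?thesis by simp
next
  case False
  hence v: "v > 0" using assms by simp
  have "(v - u) * DD Z \<le> (v - u) * DD v"
    using assms v by (intro mult_left_mono DD_anti) auto
  also have "\<dots> \<le> phi v - phi u" using L1_core assms v by blast
  finally show ?thesis .
qed

lemma L2:
  assumes "0 < Z" "0 \<le> W"
  shows "phi W \<le> phi Z + (W - Z) * DD Z"
proof (cases "W = 0")
  case True
  then show ?thesis using assms by (simp add: phi_def DD_def log_def field_simps)
next
  case False
  hence W: "W > 0" using assms by simp
  have "ln (Z/W) \<le> Z/W - 1" using W assms by (intro ln_le_minus_one) simp
  hence "W * ln (Z/W) \<le> W * (Z/W - 1)" using W by (intro mult_left_mono) auto
  hence h: "W * (ln Z - ln W) \<le> Z - W" using W assms by (simp add: ln_div algebra_simps)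
  have "ln 2 > (0::real)" by simp
  have "(phi Z + (W - Z) * DD Z - phi W) * ln 2 = W * ln W - W * ln Z - W + Z"
    using W assms by (simp add: phi_def DD_def log_def field_simps)
  also have "\<dots> \<ge> 0" using h by (simp add: algebra_simps)
  finally show ?thesis using \<open>ln 2 > 0\<close> by (simp add: zero_le_mult_iff)
qed

lemma Gibbs1:
  assumes "0 \<le> a" "0 \<le> r" "a > 0 \<Longrightarrow> r > 0"
  shows "phi a \<le> (if a = 0 then 0 else - a * log 2 r) + (r - a) / ln 2"
proof (cases "a = 0")
  case True then show ?thesis using assms by (simp add: phi_def)
next
  case False
  hence a: "a > 0" and r: "r > 0" using assms by auto
  have "ln (r/a) \<le> r/a - 1" using a r by (intro ln_le_minus_one) simp
  hence "a * ln (r/a) \<le> a * (r/a - 1)" using a by (intro mult_left_mono) auto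
  hence h: "a * (ln r - ln a) \<le> r - a" using a r by (simp add: ln_div algebra_simps)
  have "((- a * log 2 r) + (r - a) / ln 2 - phi a) * ln 2 = r - a - a * (ln r - ln a)"
    using a r False by (simp add: phi_def log_def field_simps)
  also have "\<dots> \<ge> 0" using h by simp
  finally show ?thesis using False by (simp add: zero_le_mult_iff)
qed

lemma chord:
  assumes "0 < mu" "mu \<le> y" "y \<le> 2 * mu"
  shows "y * log 2 y \<le> y * log 2 mu + 2 * (y - mu)"
proof -
  define s where "s = y / mu"
  have s1: "1 \<le> s" and s2: "s \<le> 2" using assms by (auto simp: s_def field_simps)
  define t where "t = 2 - 2 / s"
  have t0: "0 \<le> t" and t1: "t \<le> 1" using s1 s2 by (auto simp: t_def field_simps)
  have "(1 - t) * ln 1 + t * ln (1/2) \<le> ln ((1 - t) *\<^sub>R 1 + t *\<^sub>R (1/2::real))"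
    by (rule concave_onD[OF ln_concave]) (use t0 t1 in auto)
  also have "(1 - t) *\<^sub>R 1 + t *\<^sub>R (1/2::real) = 1 / s"
    using s1 by (simp add: t_def field_simps)
  finally have "- t * ln 2 \<le> - ln s" using s1 by (simp add: ln_div)
  hence "ln s \<le> t * ln 2" by simp
  hence "s * ln s \<le> s * (t * ln 2)" using s1 by (intro mult_left_mono) auto
  also have "s * (t * ln 2) = 2 * (s - 1) * ln 2" using s1 by (simp add: t_def field_simps)
  finally have A: "s * ln s \<le> 2 * (s - 1) * ln 2" .
  have y: "y = s * mu" using assms by (simp add: s_def)
  have "y * log 2 y - y * log 2 mu = mu * (s * ln s) / ln 2"
    using assms s1 by (simp add: y log_def ln_mult field_simps)
  also have "\<dots> \<le> mu * (2 * (s - 1) * ln 2) / ln 2"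
    using A assms by (intro divide_right_mono mult_left_mono) auto
  also have "\<dots> = 2 * (y - mu)" by (simp add: y field_simps)
  finally show ?thesis by simp
qed

lemma key:
  assumes "0 < s"
  shows "2 - 2 / s - log 2 s \<le> 1 - (1 + ln (ln 2)) / ln (2::real)"
proof -
  define t where "t = s / (2 * ln 2)"
  have t: "t > 0" using assms by (simp add: t_def)
  have "ln (1/t) \<le> 1/t - 1" using t by (intro ln_le_minus_one) simp
  hence h: "0 \<le> ln t + 1/t - 1" using t by (simp add: ln_div)
  have s: "s = 2 * ln 2 * t" using t_def by simp
  have l2: "ln (2::real) > 0" by simp
  have ls: "ln s = ln 2 + ln (ln 2) + ln t" using t l2 by (simp add: s ln_mult)
  have "(1 - (1 + ln (ln 2)) / ln 2) - (2 - 2 / s - log 2 s) = (ln t + 1/t - 1) / ln 2"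
    using t l2 by (simp add: log_def ls) (simp add: s field_simps)
  also have "\<dots> \<ge> 0" using h l2 by simp
  finally show ?thesis by simp
qed



lemma ln2_bounds: "ln (2::real) \<in> {0.693147..0.693148}"
proof -
  have "ln (2::real) \<in> {(\<Sum>k<10. 2*((2-1)/(2+1))^(2*k+1) / of_nat (2*k+1)) .. (\<Sum>k<10. 2*((2-1)/(2+1))^(2*k+1) / of_nat (2*k+1)) + 2*(((2-1)/(2+1))^(2*10+1) / (1 - ((2-1)/(2+1))^2) / of_nat (2*10+1))}"
    by (rule ln_approx_bounds) simp
  then show ?thesis by (simp add: numeral_eq_Suc)
qed

lemma lnx_upper: "ln (1/(0.693147::real)) \<le> 0.366514"
proof -
  define x :: real where "x = 1/0.693147"
  have "ln x \<in> {(\<Sum>k<6. 2*((x-1)/(x+1))^(2*k+1) / of_nat (2*k+1)) .. (\<Sum>k<6. 2*((x-1)/(x+1))^(2*k+1) / of_nat (2*k+1)) + 2*(((x-1)/(x+1))^(2*6+1) / (1 - ((x-1)/(x+1))^2) / of_nat (2*6+1))}"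
    by (rule ln_approx_bounds) (simp add: x_def)
  then show ?thesis by (simp add: numeral_eq_Suc x_def)
qed



lemma entropy_phi: "entropy I a = (\<Sum>i\<in>I. phi (a i))"
  by (simp add: entropy_def phi_def sum_negf[symmetric] if_distrib cong: if_cong)

lemma fiber_sum:
  fixes f :: "nat \<Rightarrow> nat" and n m :: nat and g :: "nat \<Rightarrow> 'a::comm_monoid_add"
  assumes "f \<in> {1..n} \<rightarrow>\<^sub>E {1..m}"
  shows "(\<Sum>j\<in>{1..m}. \<Sum>i\<in>{i\<in>{1..n}. f i = j}. g i) = (\<Sum>i\<in>{1..(n::nat)}. g i)"
  using sum.group[of "{1..n}" "{1..m::nat}" f g] assms by auto

context
  fixes n m :: nat and p :: "nat \<Rightarrow> real"
  assumes m2: "2 \<le> m" and mn: "m < n"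
    and pos: "\<And>i. i \<in> {1..n} \<Longrightarrow> p i \<ge> 0"
    and mono: "\<And>i j. 1 \<le> i \<Longrightarrow> i \<le> j \<Longrightarrow> j \<le> n \<Longrightarrow> p j \<le> p i"
    and sum1: "(\<Sum>i=1..n. p i) = 1"
begin

lemma img_nonneg: "img_dist n p f j \<ge> 0"
  unfolding img_dist_def by (intro sum_nonneg) (auto intro: pos)

lemma img_sum: "f \<in> {1..n} \<rightarrow>\<^sub>E {1..m} \<Longrightarrow> (\<Sum>j\<in>{1..m}. img_dist n p f j) = 1"
  unfolding img_dist_def using fiber_sum[of f n m p] sum1 by simp

lemma surj_bin_ne:
  assumes "f \<in> surj_funs n m" "j \<in> {1..m}"
  shows "{i\<in>{1..n}. f i = j} \<noteq> {}"
proof -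
  have "j \<in> f ` {1..n}" using assms by (simp add: surj_funs_def)
  then show ?thesis by auto
qed

lemma min_lower:
  assumes f: "f \<in> surj_funs n m"
  shows "entropy {1..m} (Q_vec n m p) \<le> entropy {1..m} (img_dist n p f)"
proof -
  define b where "b = img_dist n p f"
  have fE: "f \<in> {1..n} \<rightarrow>\<^sub>E {1..m}" using f by (simp add: surj_funs_def)
  have bsum: "(\<Sum>j\<in>{1..m}. b j) = 1" using img_sum[OF fE] by (simp add: b_def)
  have bnn: "\<And>j. b j \<ge> 0" by (simp add: b_def img_nonneg)
  define M where "M = Max (b ` {1..m})"
  have "M \<in> b ` {1..m}" unfolding M_def using m2 by (intro Max_in) auto
  then obtain J where J: "J \<in> {1..m}" "b J = M" by auto
  have Jmax: "\<And>j. j \<in> {1..m} \<Longrightarrow> b j \<le> b J" using J(2) unfolding M_def by (metis Max_ge finite_atLeastAtMost finite_imageI image_eqI)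
  have "1 \<le> (\<Sum>j\<in>{1..m}. b J)" using bsum sum_mono[of "{1..m}" b "\<lambda>_. b J"] Jmax by simp
  hence "1 \<le> real m * b J" by simp
  hence bJpos: "b J > 0" using m2 by (smt (verit) mult_nonneg_nonpos of_nat_0_le_iff)
  define e where "e j = Max {i\<in>{1..n}. f i = j}" for j
  have e_in: "\<And>j. j \<in> {1..m} \<Longrightarrow> e j \<in> {i\<in>{1..n}. f i = j}"
    unfolding e_def by (intro Max_in) (use surj_bin_ne[OF f] in auto)
  have e1: "\<And>j. j \<in> {1..m} \<Longrightarrow> e j \<in> {1..n}" and e2: "\<And>j. j \<in> {1..m} \<Longrightarrow> f (e j) = j"
    using e_in by auto
  have pe_le: "\<And>j. j \<in> {1..m} \<Longrightarrow> p (e j) \<le> b j"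
    unfolding b_def img_dist_def using e_in by (intro member_le_sum) (auto intro: pos)
  have pe_nn: "\<And>j. j \<in> {1..m} \<Longrightarrow> 0 \<le> p (e j)" using e1 pos by blast
  have inj: "inj_on e {1..m}" by (metis e2 inj_onI)
  define S where "S = e ` ({1..m} - {J})"
  have injS: "inj_on e ({1..m} - {J})" using inj by (rule inj_on_subset) auto
  have cardS: "card S = m - 1" unfolding S_def using card_image[OF injS] J by simp
  have S_sub: "S \<subseteq> {1..n}" unfolding S_def using e1 by auto
  have finS: "finite S" using S_sub finite_subset by blast
  have sumS: "\<And>g. (\<Sum>x\<in>S. g x) = (\<Sum>j\<in>{1..m} - {J}. g (e j))"
    unfolding S_def by (rule sum.reindex[OF injS, unfolded comp_def])
  define Z where "Z = 1 - (\<Sum>x\<in>S. p x)"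
  have bsplit: "(\<Sum>j\<in>{1..m}. g j) = g J + (\<Sum>j\<in>{1..m} - {J}. g j)" for g :: "nat \<Rightarrow> real"
    using J by (simp add: sum.remove)
  have Zeq: "Z - b J = (\<Sum>j\<in>{1..m} - {J}. b j - p (e j))"
    using bsplit[of b] bsum by (simp add: Z_def sumS sum_subtractf)
  have ZbJ: "b J \<le> Z"
    using Zeq sum_nonneg[of "{1..m} - {J}" "\<lambda>j. b j - p (e j)"] pe_le by auto
  have Zpos: "Z > 0" using ZbJ bJpos by simp
  have st1: "phi Z + (\<Sum>j\<in>{1..m} - {J}. phi (p (e j))) \<le> (\<Sum>j\<in>{1..m}. phi (b j))"
  proof -
    have "(\<Sum>j\<in>{1..m} - {J}. (b j - p (e j)) * DD (b J)) \<le> (\<Sum>j\<in>{1..m} - {J}. phi (b j) - phi (p (e j)))"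
      by (intro sum_mono L1) (use pe_nn pe_le Jmax bJpos in auto)
    also have "(\<Sum>j\<in>{1..m} - {J}. (b j - p (e j)) * DD (b J)) = (Z - b J) * DD (b J)"
      by (simp add: Zeq sum_distrib_right)
    finally have A: "(Z - b J) * DD (b J) \<le> (\<Sum>j\<in>{1..m} - {J}. phi (b j)) - (\<Sum>j\<in>{1..m} - {J}. phi (p (e j)))"
      by (simp add: sum_subtractf)
    have B: "phi Z \<le> phi (b J) + (Z - b J) * DD (b J)" using L2[OF bJpos, of Z] Zpos by simp
    show ?thesis using A B bsplit[of "\<lambda>j. phi (b j)"] by simp
  qed
  define S0 where "S0 = {n-m+2..n}"
  define Z0 where "Z0 = (\<Sum>x=1..n-m+1. p x)"
  have cardS0: "card S0 = m - 1" unfolding S0_def using mn m2 by simp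
  have un: "{1..n} = {1..n-m+1} \<union> S0" unfolding S0_def using mn m2 by auto
  have Z0eq: "Z0 = 1 - (\<Sum>x\<in>S0. p x)"
    using sum1 unfolding un Z0_def by (subst (asm) sum.union_disjoint) (auto simp: S0_def)
  have Z0nn: "Z0 \<ge> 0" unfolding Z0_def using mn m2 by (intro sum_nonneg pos) auto
  have st2: "phi Z0 + (\<Sum>x\<in>S0. phi (p x)) \<le> phi Z + (\<Sum>x\<in>S. phi (p x))"
  proof (cases "S - S0 = {}")
    case True
    hence "S \<subseteq> S0" by auto
    hence "S = S0" using cardS cardS0 by (intro card_subset_eq) (auto simp: S0_def)
    then show ?thesis by (simp add: Z_def Z0eq)
  next
    case False
    then obtain x0 where x0: "x0 \<in> S" "x0 \<notin> S0" by auto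
    have x0n: "x0 \<in> {1..n}" using x0 S_sub by auto
    have x0le: "x0 \<le> n - m + 1" using x0 x0n unfolding S0_def by auto
    define c where "c = p (n - m + 1)"
    have c0: "0 \<le> c" unfolding c_def using mn m2 by (intro pos) auto
    have pS_le: "p x \<le> Z" if xS: "x \<in> S" for x
    proof -
      obtain j where j: "j \<in> {1..m} - {J}" "x = e j" using xS unfolding S_def by blast
      then show ?thesis using pe_le[of j] Jmax[of j] ZbJ by auto
    qed
    have "c \<le> p x0" unfolding c_def by (rule mono) (use x0n x0le mn m2 in auto)
    then have cZ: "c \<le> Z" using pS_le[OF x0(1)] by linarith
    have A1: "(\<Sum>x\<in>S - S0. (p x - c) * DD Z) \<le> (\<Sum>x\<in>S - S0. phi (p x) - phi c)"
    proof (intro sum_mono L1)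
      fix x assume x: "x \<in> S - S0"
      hence xn: "x \<in> {1..n}" using S_sub by auto
      hence "x \<le> n - m + 1" using x unfolding S0_def by auto
      thus "c \<le> p x" unfolding c_def by (intro mono) (use xn mn m2 in auto)
      show "p x \<le> Z" using pS_le x by auto
    qed (use c0 Zpos in auto)
    have A2: "(\<Sum>x\<in>S0 - S. (c - p x) * DD Z) \<le> (\<Sum>x\<in>S0 - S. phi c - phi (p x))"
    proof (intro sum_mono L1)
      fix x assume x: "x \<in> S0 - S"
      hence xn: "x \<in> {1..n}" "n - m + 1 \<le> x" unfolding S0_def using mn m2 by auto
      thus "p x \<le> c" unfolding c_def by (intro mono) (use xn mn m2 in auto)
      show "0 \<le> p x" using pos xn by auto
    qed (use cZ Zpos in auto)
    have finS0: "finite S0" by (simp add: S0_def)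
    have cc: "card (S - S0) = card (S0 - S)"
      using cardS cardS0 finS finS0 by (simp add: card_Diff_subset_Int Int_commute)
    have sp1: "(\<Sum>x\<in>S. g x) = (\<Sum>x\<in>S \<inter> S0. g x) + (\<Sum>x\<in>S - S0. g x)" for g :: "nat \<Rightarrow> real"
      using finS by (rule sum.Int_Diff)
    have sp2: "(\<Sum>x\<in>S0. g x) = (\<Sum>x\<in>S \<inter> S0. g x) + (\<Sum>x\<in>S0 - S. g x)" for g :: "nat \<Rightarrow> real"
      using sum.Int_Diff[OF finS0, of g S] by (simp add: Int_commute)
    have L: "phi Z0 \<le> phi Z + (Z0 - Z) * DD Z" using L2[OF Zpos Z0nn] .
    have dz: "Z0 - Z = (\<Sum>x\<in>S - S0. p x) - (\<Sum>x\<in>S0 - S. p x)"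
      using sp1[of p] sp2[of p] by (simp add: Z0eq Z_def)
    have E1: "(\<Sum>x\<in>S - S0. (p x - c) * DD Z) = (\<Sum>x\<in>S - S0. p x) * DD Z - real (card (S - S0)) * c * DD Z"
      by (simp add: sum_distrib_right sum_subtractf left_diff_distrib)
    have E2: "(\<Sum>x\<in>S0 - S. (c - p x) * DD Z) = real (card (S0 - S)) * c * DD Z - (\<Sum>x\<in>S0 - S. p x) * DD Z"
      by (simp add: sum_distrib_right sum_subtractf left_diff_distrib)
    have E3: "(\<Sum>x\<in>S - S0. phi (p x) - phi c) = (\<Sum>x\<in>S - S0. phi (p x)) - real (card (S - S0)) * phi c"
      by (simp add: sum_subtractf)
    have E4: "(\<Sum>x\<in>S0 - S. phi c - phi (p x)) = real (card (S0 - S)) * phi c - (\<Sum>x\<in>S0 - S. phi (p x))"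
      by (simp add: sum_subtractf)
    have "(Z0 - Z) * DD Z = (\<Sum>x\<in>S - S0. p x) * DD Z - (\<Sum>x\<in>S0 - S. p x) * DD Z"
      by (simp add: dz left_diff_distrib)
    note dzz = this
    have cc': "real (card (S0 - S)) = real (card (S - S0))" using cc by simp
    show ?thesis using A1 A2 E1 E2[unfolded cc'] E3 E4[unfolded cc'] L dzz sp1[of "\<lambda>x. phi (p x)"] sp2[of "\<lambda>x. phi (p x)"]
      by linarith
  qed
  have HQ: "entropy {1..m} (Q_vec n m p) = phi Z0 + (\<Sum>x\<in>S0. phi (p x))"
  proof -
    have q1: "Q_vec n m p 1 = Z0" by (simp add: Q_vec_def Z0_def)
    have "{1..m} = insert 1 {2..m}" using m2 by auto
    hence "entropy {1..m} (Q_vec n m p) = phi (Q_vec n m p 1) + (\<Sum>i\<in>{2..m}. phi (Q_vec n m p i))"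
      by (simp add: entropy_phi)
    also have "(\<Sum>i\<in>{2..m}. phi (Q_vec n m p i)) = (\<Sum>i\<in>{2..m}. phi (p (i + (n - m))))"
      by (intro sum.cong) (auto simp: Q_vec_def add.commute)
    also have "\<dots> = (\<Sum>x\<in>S0. phi (p x))" unfolding S0_def
      using sum.shift_bounds_cl_nat_ivl[of "\<lambda>x. phi (p x)" 2 "n - m" m] mn m2 by simp
    finally show ?thesis by (simp only: q1)
  qed
  have "entropy {1..m} (img_dist n p f) = (\<Sum>j\<in>{1..m}. phi (b j))" by (simp add: entropy_phi b_def)
  moreover have "(\<Sum>x\<in>S. phi (p x)) = (\<Sum>j\<in>{1..m}-{J}. phi (p (e j)))" by (rule sumS)
  ultimately show ?thesis using st1 st2 HQ by linarith
qed

end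


definition sp :: "nat \<Rightarrow> nat \<Rightarrow> (nat \<Rightarrow> real) \<Rightarrow> nat" where
  "sp n m p = (if p 1 < 1 / real m then 0 else istar n m p)"
definition TT :: "nat \<Rightarrow> nat \<Rightarrow> (nat \<Rightarrow> real) \<Rightarrow> real" where
  "TT n m p = (\<Sum>j=sp n m p+1..n. p j)"
definition tt :: "nat \<Rightarrow> nat \<Rightarrow> (nat \<Rightarrow> real) \<Rightarrow> real" where
  "tt n m p = TT n m p / real (m - sp n m p)"


lemma tail_bound:
  fixes B :: "nat set" and y :: "nat \<Rightarrow> real"
  assumes fin: "finite B" and ne: "B \<noteq> {}" and nn: "\<And>j. j \<in> B \<Longrightarrow> y j \<ge> 0"
    and bal: "\<And>j j'. j \<in> B \<Longrightarrow> j' \<in> B \<Longrightarrow> y j \<le> 2 * y j'"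
  shows "(\<Sum>j\<in>B. phi (y j)) \<ge> real (card B) * phi ((\<Sum>j\<in>B. y j) / real (card B))
           - (1 - (1 + ln (ln 2)) / ln (2::real)) * (\<Sum>j\<in>B. y j)"
proof -
  define T where "T = (\<Sum>j\<in>B. y j)"
  define k where "k = real (card B)"
  have kpos: "k > 0" using fin ne by (simp add: k_def card_gt_0_iff)
  show ?thesis
  proof (cases "T = 0")
    case True
    hence "\<forall>j\<in>B. y j = 0" using fin nn by (simp add: T_def sum_nonneg_eq_0_iff)
    then show ?thesis using True by (simp add: T_def phi_def)
  next
    case False
    hence Tpos: "T > 0" using nn sum_nonneg[of B y] by (simp add: T_def)
    define mu where "mu = Min (y ` B)"
    have "mu \<in> y ` B" unfolding mu_def using fin ne by (intro Min_in) auto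
    then obtain j0 where j0: "j0 \<in> B" "mu = y j0" by auto
    have mule: "\<And>j. j \<in> B \<Longrightarrow> mu \<le> y j" unfolding mu_def using fin by (intro Min_le) auto
    obtain j1 where j1: "j1 \<in> B" "y j1 > 0"
    proof (rule ccontr)
      assume "\<not> thesis"
      hence "\<forall>j\<in>B. y j \<le> 0" using that by (meson not_le)
      hence "T \<le> 0" unfolding T_def by (intro sum_nonpos) auto
      thus False using Tpos by simp
    qed
    have mupos: "mu > 0" using bal[OF j1(1) j0(1)] j1(2) j0(2) by simp
    have ypos: "\<And>j. j \<in> B \<Longrightarrow> y j > 0" using mule mupos by (meson less_le_trans)
    have ch: "y j * log 2 (y j) \<le> y j * log 2 mu + 2 * (y j - mu)" if "j \<in> B" for j
      using chord[OF mupos mule[OF that]] bal[OF that j0(1)] j0(2) by simp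
    have "(\<Sum>j\<in>B. phi (y j)) = (\<Sum>j\<in>B. - (y j * log 2 (y j)))"
      by (intro sum.cong) (use ypos in \<open>auto simp: phi_def\<close>)
    also have "\<dots> \<ge> (\<Sum>j\<in>B. - (y j * log 2 mu + 2 * (y j - mu)))"
      using ch by (intro sum_mono) (smt (verit))
    finally have A: "(\<Sum>j\<in>B. phi (y j)) \<ge> - T * log 2 mu - 2 * T + 2 * k * mu"
      by (simp add: sum.distrib sum_subtractf sum_negf sum_distrib_right[symmetric] T_def k_def algebra_simps)
    define s where "s = T / (k * mu)"
    have spos: "s > 0" using Tpos kpos mupos by (simp add: s_def)
    have K: "2 - 2 / s - log 2 s \<le> 1 - (1 + ln (ln 2)) / ln (2::real)" by (rule key[OF spos])
    have Ts: "T / s = k * mu" using spos kpos mupos Tpos by (simp add: s_def field_simps)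
    have "T * (2 - 2 / s - log 2 s) \<le> T * (1 - (1 + ln (ln 2)) / ln (2::real))"
      using K Tpos by (intro mult_left_mono) auto
    moreover have "T * 2 / s = 2 * (k * mu)" using Ts by (metis times_divide_eq_right mult.commute)
    ultimately have K2: "2 * T - 2 * k * mu - T * log 2 s \<le> (1 - (1 + ln (ln 2)) / ln (2::real)) * T"
      by (simp add: algebra_simps)
    have "T / k = mu * s" using kpos mupos by (simp add: s_def field_simps)
    hence lg: "log 2 (T / k) = log 2 mu + log 2 s" using mupos spos by (simp add: log_mult)
    have "k * phi (T / k) = - T * log 2 (T / k)" using Tpos kpos by (simp add: phi_def field_simps)
    then show ?thesis using A K2 lg unfolding T_def[symmetric] k_def[symmetric] by (simp add: algebra_simps)
  qed
qed

context
  fixes n m :: nat and p :: "nat \<Rightarrow> real"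
  assumes m2: "2 \<le> m" and mn: "m < n"
    and pos: "\<And>i. i \<in> {1..n} \<Longrightarrow> p i \<ge> 0"
    and mono: "\<And>i j. 1 \<le> i \<Longrightarrow> i \<le> j \<Longrightarrow> j \<le> n \<Longrightarrow> p j \<le> p i"
    and sum1: "(\<Sum>i=1..n. p i) = 1"
begin

lemma sum_split_at:
  assumes "k \<le> n"
  shows "(\<Sum>i=1..n. g i) = (\<Sum>i=1..k. g i) + (\<Sum>i=k+1..n. (g i :: real))"
proof -
  have "{1..n} = {1..k} \<union> {k+1..n}" using assms by auto
  thus ?thesis by (simp add: sum.union_disjoint)
qed

lemma R_props:
  shows "sp n m p < m"
    and "\<And>i. i \<in> {1..m} \<Longrightarrow> R_vec n m p i = (if i \<le> sp n m p then p i else tt n m p)"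
    and "\<And>i. i \<in> {1..sp n m p} \<Longrightarrow> tt n m p \<le> p i"
    and "2 \<le> m - sp n m p \<Longrightarrow> real (m - sp n m p) * p (sp n m p + 1) < TT n m p"
    and "(\<Sum>i=1..sp n m p. p i) + TT n m p = 1"
proof -
  have c: "(\<Sum>i=1..sp n m p. p i) + TT n m p = 1 \<and> sp n m p < m
    \<and> (\<forall>i\<in>{1..m}. R_vec n m p i = (if i \<le> sp n m p then p i else tt n m p))
    \<and> (\<forall>i\<in>{1..sp n m p}. tt n m p \<le> p i)
    \<and> (2 \<le> m - sp n m p \<longrightarrow> real (m - sp n m p) * p (sp n m p + 1) < TT n m p)"
  proof (cases "p 1 < 1 / real m")
    case True
    hence sp0: "sp n m p = 0" by (simp add: sp_def)
    have T1: "TT n m p = 1" using sum1 by (simp add: TT_def sp0)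
    have "real m * p 1 < 1" using True m2 by (simp add: field_simps)
    then show ?thesis using True m2 by (simp add: sp0 T1 tt_def R_vec_def)
  next
    case False
    define A where "A = {i\<in>{1..m-1}. p i \<ge> (\<Sum>j=i+1..n. p j) / real (m - i)}"
    have spi: "sp n m p = Max A" using False by (simp add: sp_def istar_def A_def)
    have finA: "finite A" by (simp add: A_def)
    have "(\<Sum>j=1+1..n. p j) = 1 - p 1" using sum_split_at[of 1 p] sum1 mn by simp
    moreover have "1 \<le> real m * p 1" using False m2 by (simp add: field_simps not_less)
    ultimately have "(\<Sum>j=1+1..n. p j) / real (m - 1) \<le> p 1"
      using m2 by (simp add: pos_divide_le_eq of_nat_diff algebra_simps)
    hence "1 \<in> A" using m2 by (simp add: A_def)
    hence AM: "Max A \<in> A" using finA by (intro Max_in) auto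
    define k where "k = Max A"
    have kA: "k \<in> A" using AM k_def by simp
    have k1: "1 \<le> k" "k \<le> m - 1" using kA by (auto simp: A_def)
    have kge: "(\<Sum>j=k+1..n. p j) / real (m - k) \<le> p k" using kA by (simp add: A_def)
    have spk: "sp n m p = k" using spi k_def by simp
    have ttk: "tt n m p = (\<Sum>j=k+1..n. p j) / real (m - k)" by (simp add: tt_def TT_def spk)
    have s1: "(\<Sum>i=1..sp n m p. p i) + TT n m p = 1"
      using sum_split_at[of k p] sum1 k1 mn by (simp add: TT_def spk)
    have s2: "\<forall>i\<in>{1..sp n m p}. tt n m p \<le> p i"
    proof
      fix i assume "i \<in> {1..sp n m p}"
      hence "p k \<le> p i" using k1 mn spk by (intro mono) auto
      thus "tt n m p \<le> p i" using kge ttk by simp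
    qed
    have s3: "\<forall>i\<in>{1..m}. R_vec n m p i = (if i \<le> sp n m p then p i else tt n m p)"
      using False by (simp add: R_vec_def sp_def tt_def TT_def)
    have s4: "real (m - k) * p (k + 1) < TT n m p" if k2: "2 \<le> m - k"
    proof -
      have "k + 1 \<notin> A"
      proof
        assume "k + 1 \<in> A"
        hence "k + 1 \<le> Max A" using finA by (intro Max_ge)
        thus False using k_def by simp
      qed
      hence lt: "p (k+1) < (\<Sum>j=k+1+1..n. p j) / real (m - (k+1))"
        using k1 k2 by (auto simp: A_def not_le)
      have pos': "real (m - (k+1)) > 0" using k2 by simp
      have "p (k+1) * real (m - (k+1)) < (\<Sum>j=k+1+1..n. p j)"
        using lt pos' by (simp add: pos_less_divide_eq)
      moreover have "TT n m p = p (k+1) + (\<Sum>j=k+1+1..n. p j)"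
        unfolding TT_def spk using k1 mn by (subst sum.atLeast_Suc_atMost) auto
      moreover have "real (m - k) = real (m - (k+1)) + 1" using k2 by simp
      ultimately show ?thesis by (simp add: algebra_simps)
    qed
    show ?thesis using s1 s2 s3 s4 k1 m2 spk by auto
  qed
  show "(\<Sum>i=1..sp n m p. p i) + TT n m p = 1" using c by blast
  show "sp n m p < m" using c by blast
  show "\<And>i. i \<in> {1..m} \<Longrightarrow> R_vec n m p i = (if i \<le> sp n m p then p i else tt n m p)" using c by blast
  show "\<And>i. i \<in> {1..sp n m p} \<Longrightarrow> tt n m p \<le> p i" using c by blast
  show "2 \<le> m - sp n m p \<Longrightarrow> real (m - sp n m p) * p (sp n m p + 1) < TT n m p" using c by blast
qed

lemma HR_eq: "entropy {1..m} (R_vec n m p) = (\<Sum>i=1..sp n m p. phi (p i)) + real (m - sp n m p) * phi (tt n m p)"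
proof -
  have spm: "sp n m p < m" by (rule R_props(1))
  have "{1..m} = {1..sp n m p} \<union> {sp n m p+1..m}" using spm by auto
  hence "entropy {1..m} (R_vec n m p) = (\<Sum>i=1..sp n m p. phi (R_vec n m p i)) + (\<Sum>i=sp n m p+1..m. phi (R_vec n m p i))"
    by (simp add: entropy_phi sum.union_disjoint)
  also have "(\<Sum>i=1..sp n m p. phi (R_vec n m p i)) = (\<Sum>i=1..sp n m p. phi (p i))"
    using R_props(2) spm by (intro sum.cong) auto
  also have "(\<Sum>i=sp n m p+1..m. phi (R_vec n m p i)) = (\<Sum>i=sp n m p+1..m. phi (tt n m p))"
    using R_props(2) spm by (intro sum.cong) auto
  also have "\<dots> = real (m - sp n m p) * phi (tt n m p)" using spm by simp
  finally show ?thesis .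
qed

lemma TT_nn: "TT n m p \<ge> 0"
  unfolding TT_def by (intro sum_nonneg pos) auto

lemma tt_nn: "tt n m p \<ge> 0"
  unfolding tt_def using TT_nn by simp

lemma TT_eq: "TT n m p = real (m - sp n m p) * tt n m p"
  using R_props(1) by (simp add: tt_def)

definition rr :: "nat \<Rightarrow> real" where "rr x = (if x \<le> sp n m p then p x else tt n m p)"

lemma rr_mono: "1 \<le> x \<Longrightarrow> x \<le> y \<Longrightarrow> y \<le> n \<Longrightarrow> rr y \<le> rr x"
  using R_props(3)[of x] mono[of x y] by (auto simp: rr_def)

lemma rr_nn: "x \<in> {1..n} \<Longrightarrow> rr x \<ge> 0"
  using pos tt_nn by (auto simp: rr_def)

lemma rr_pos: "x \<in> {1..n} \<Longrightarrow> p x > 0 \<Longrightarrow> rr x > 0"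
proof -
  assume x: "x \<in> {1..n}" and px: "p x > 0"
  show "rr x > 0"
  proof (cases "x \<le> sp n m p")
    case True then show ?thesis using px by (simp add: rr_def)
  next
    case False
    have "p x \<le> TT n m p" unfolding TT_def using x False
      by (intro member_le_sum pos) auto
    then show ?thesis using False px R_props(1) by (simp add: rr_def tt_def)
  qed
qed

lemma rr_sum_le:
  assumes E: "E \<subseteq> {1..n}" "card E \<le> m"
  shows "(\<Sum>x\<in>E. rr x) \<le> 1"
proof -
  define s where "s = sp n m p"
  define E1 where "E1 = E \<inter> {1..s}"
  define E2 where "E2 = E - {1..s}"
  have finE: "finite E" using E finite_subset by blast
  have c: "card E = card E1 + card E2" unfolding E1_def E2_def using finE
    by (metis card_Int_Diff)
  have "(\<Sum>x\<in>E. rr x) = (\<Sum>x\<in>E1. rr x) + (\<Sum>x\<in>E2. rr x)"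
    unfolding E1_def E2_def using finE by (rule sum.Int_Diff)
  also have "(\<Sum>x\<in>E1. rr x) = (\<Sum>x\<in>E1. p x)" by (intro sum.cong) (auto simp: E1_def rr_def s_def)
  also have "(\<Sum>x\<in>E2. rr x) = (\<Sum>x\<in>E2. tt n m p)"
    by (intro sum.cong) (use E in \<open>auto simp: E2_def rr_def s_def\<close>)
  also have "\<dots> = real (card E2) * tt n m p" by simp
  finally have A: "(\<Sum>x\<in>E. rr x) = (\<Sum>x\<in>E1. p x) + real (card E2) * tt n m p" .
  have E1s: "E1 \<subseteq> {1..s}" by (auto simp: E1_def)
  have "(\<Sum>x=1..s. p x) = (\<Sum>x\<in>E1. p x) + (\<Sum>x\<in>{1..s} - E1. p x)"
    using E1s by (simp add: sum.subset_diff)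
  moreover have "(\<Sum>x\<in>{1..s} - E1. p x) \<ge> (\<Sum>x\<in>{1..s} - E1. tt n m p)"
    using R_props(3) by (intro sum_mono) (auto simp: s_def)
  moreover have "card ({1..s} - E1) = s - card E1" using E1s by (simp add: card_Diff_subset finite_subset)
  moreover have "card E1 \<le> s" using E1s by (metis card_atLeastAtMost card_mono diff_Suc_1 finite_atLeastAtMost)
  ultimately have B: "(\<Sum>x=1..s. p x) \<ge> (\<Sum>x\<in>E1. p x) + (real s - real (card E1)) * tt n m p"
    by (simp add: of_nat_diff)
  have C: "(\<Sum>x=1..s. p x) + real (m - s) * tt n m p = 1"
    using R_props(5) TT_eq by (simp add: s_def)
  have D: "real (card E2) \<le> real m - real (card E1)" using c E by simp
  have "real (card E2) * tt n m p \<le> (real m - real (card E1)) * tt n m p"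
    using D tt_nn by (intro mult_right_mono) auto
  moreover have "real (m - s) = real m - real s" using R_props(1) by (simp add: s_def of_nat_diff)
  ultimately show ?thesis using A B C by (simp add: algebra_simps)
qed

lemma max_upper:
  assumes f: "f \<in> surj_funs n m"
  shows "entropy {1..m} (img_dist n p f) \<le> entropy {1..m} (R_vec n m p)"
proof -
  define b where "b = img_dist n p f"
  have fE: "f \<in> {1..n} \<rightarrow>\<^sub>E {1..m}" using f by (simp add: surj_funs_def)
  have bsum: "(\<Sum>j\<in>{1..m}. b j) = 1" using img_sum[OF m2 mn pos mono sum1 fE] by (simp add: b_def)
  define bin where "bin j = {i\<in>{1..n}. f i = j}" for j
  have bdef: "b j = (\<Sum>x\<in>bin j. p x)" for j by (simp add: b_def img_dist_def bin_def)
  define e where "e j = Min (bin j)" for j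
  have e_in: "\<And>j. j \<in> {1..m} \<Longrightarrow> e j \<in> bin j"
    unfolding e_def bin_def by (intro Min_in) (use surj_bin_ne[OF m2 mn pos mono sum1 f] in auto)
  have e1: "\<And>j. j \<in> {1..m} \<Longrightarrow> e j \<in> {1..n}" and e2: "\<And>j. j \<in> {1..m} \<Longrightarrow> f (e j) = j"
    using e_in by (auto simp: bin_def)
  have inj: "inj_on e {1..m}" by (metis e2 inj_onI)
  define rho where "rho j = rr (e j)" for j
  have rho_ge: "rr x \<le> rho j" if "j \<in> {1..m}" "x \<in> bin j" for j x
  proof -
    have "e j \<le> x" unfolding e_def using that by (intro Min_le) (auto simp: bin_def)
    then show ?thesis unfolding rho_def using that e1[of j] by (intro rr_mono) (auto simp: bin_def)
  qed
  have rho_nn: "j \<in> {1..m} \<Longrightarrow> rho j \<ge> 0" for j using rr_nn e1 by (simp add: rho_def)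
  have pbin_nn: "x \<in> bin j \<Longrightarrow> p x \<ge> 0" for x j using pos by (auto simp: bin_def)
  have finbin: "finite (bin j)" for j by (simp add: bin_def)
  have rho_pos: "rho j > 0" if j: "j \<in> {1..m}" and bj: "b j > 0" for j
  proof -
    have "\<exists>x\<in>bin j. p x > 0"
    proof (rule ccontr)
      assume "\<not> ?thesis"
      hence "\<forall>x\<in>bin j. p x = 0" using pbin_nn by (force intro: order_antisym simp: not_less)
      hence "b j = 0" by (simp add: bdef)
      thus False using bj by simp
    qed
    then obtain x where x: "x \<in> bin j" "p x > 0" by blast
    have "rr x > 0" using x by (intro rr_pos) (auto simp: bin_def)
    thus ?thesis using rho_ge[OF j x(1)] by simp
  qed
  have bnn: "b j \<ge> 0" for j unfolding bdef by (intro sum_nonneg pbin_nn)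
  define G where "G j = (if b j = 0 then 0 else - b j * log 2 (rho j))" for j
  have step1: "phi (b j) \<le> G j + (rho j - b j) / ln 2" if "j \<in> {1..m}" for j
    unfolding G_def by (rule Gibbs1) (use bnn rho_nn rho_pos that in auto)
  have rho_sum: "(\<Sum>j\<in>{1..m}. rho j) \<le> 1"
  proof -
    have "(\<Sum>j\<in>{1..m}. rho j) = (\<Sum>x\<in>e ` {1..m}. rr x)"
      unfolding rho_def using sum.reindex[OF inj, of rr] by simp
    also have "\<dots> \<le> 1" using e1 card_image_le[of "{1..m}" e] by (intro rr_sum_le) auto
    finally show ?thesis .
  qed
  define psi where "psi x = (if p x = 0 then 0 else - p x * log 2 (rr x))" for x
  have step2: "G j \<le> (\<Sum>x\<in>bin j. psi x)" if j: "j \<in> {1..m}" for j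
  proof (cases "b j = 0")
    case True
    hence "\<forall>x\<in>bin j. p x = 0" using finbin pbin_nn by (simp add: bdef sum_nonneg_eq_0_iff)
    then show ?thesis using True by (simp add: G_def psi_def)
  next
    case False
    hence bj: "b j > 0" using bnn[of j] by simp
    have "G j = (\<Sum>x\<in>bin j. - p x * log 2 (rho j))" using False by (simp add: G_def bdef sum_distrib_right sum_negf)
    also have "\<dots> \<le> (\<Sum>x\<in>bin j. psi x)"
    proof (intro sum_mono)
      fix x assume x: "x \<in> bin j"
      show "- p x * log 2 (rho j) \<le> psi x"
      proof (cases "p x = 0")
        case True then show ?thesis by (simp add: psi_def)
      next
        case False
        hence px: "p x > 0" using pbin_nn[OF x] by simp
        have rx: "rr x > 0" using px x by (intro rr_pos) (auto simp: bin_def)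
        have "log 2 (rr x) \<le> log 2 (rho j)" using rx rho_ge[OF j x] by simp
        then show ?thesis using False px by (simp add: psi_def)
      qed
    qed
    finally show ?thesis .
  qed
  have "entropy {1..m} (img_dist n p f) = (\<Sum>j\<in>{1..m}. phi (b j))" by (simp add: entropy_phi b_def)
  also have "\<dots> \<le> (\<Sum>j\<in>{1..m}. G j + (rho j - b j) / ln 2)" by (intro sum_mono step1)
  also have "\<dots> = (\<Sum>j\<in>{1..m}. G j) + ((\<Sum>j\<in>{1..m}. rho j) - 1) / ln 2"
    using bsum by (simp add: sum.distrib sum_divide_distrib[symmetric] sum_subtractf)
  also have "\<dots> \<le> (\<Sum>j\<in>{1..m}. G j)" using rho_sum by (simp add: divide_nonpos_pos)
  also have "\<dots> \<le> (\<Sum>j\<in>{1..m}. \<Sum>x\<in>bin j. psi x)" by (intro sum_mono step2)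
  also have "\<dots> = (\<Sum>x\<in>{1..n}. psi x)" unfolding bin_def by (rule fiber_sum[OF fE])
  also have "\<dots> = entropy {1..m} (R_vec n m p)"
  proof -
    define s where "s = sp n m p"
    have sn: "s \<le> n" using R_props(1) mn by (simp add: s_def)
    have "(\<Sum>x\<in>{1..n}. psi x) = (\<Sum>x=1..s. psi x) + (\<Sum>x=s+1..n. psi x)" by (rule sum_split_at[OF sn])
    also have "(\<Sum>x=1..s. psi x) = (\<Sum>x=1..s. phi (p x))"
      by (intro sum.cong) (auto simp: psi_def rr_def phi_def s_def)
    also have "(\<Sum>x=s+1..n. psi x) = real (m - s) * phi (tt n m p)"
    proof (cases "TT n m p = 0")
      case True
      hence "\<forall>x\<in>{s+1..n}. p x = 0" using pos unfolding TT_def s_def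
        by (subst (asm) sum_nonneg_eq_0_iff) auto
      hence "(\<Sum>x=s+1..n. psi x) = 0" by (simp add: psi_def)
      moreover have "tt n m p = 0" using True by (simp add: tt_def)
      ultimately show ?thesis by (simp add: phi_def)
    next
      case False
      have ttp: "tt n m p > 0" using False TT_nn R_props(1) by (simp add: tt_def)
      have "(\<Sum>x=s+1..n. psi x) = (\<Sum>x=s+1..n. - p x * log 2 (tt n m p))"
        by (intro sum.cong) (auto simp: psi_def rr_def s_def)
      also have "\<dots> = - TT n m p * log 2 (tt n m p)" by (simp add: TT_def s_def sum_distrib_right sum_negf)
      also have "\<dots> = real (m - s) * phi (tt n m p)" using ttp TT_eq by (simp add: phi_def s_def)
      finally show ?thesis .
    qed
    finally show ?thesis using HR_eq by (simp add: s_def)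
  qed
  finally show ?thesis .
qed

lemma max_lower:
  "\<exists>f\<in>surj_funs n m. entropy {1..m} (img_dist n p f) \<ge> entropy {1..m} (R_vec n m p) - (1 - (1 + ln (ln 2)) / ln (2::real))"
proof -
  define s where "s = sp n m p"
  have sm: "s < m" using R_props(1) by (simp add: s_def)
  define k where "k = m - s"
  define G where "G = {s+1..n} \<rightarrow>\<^sub>E {s+1..m}"
  define Y where "Y h j = (\<Sum>i\<in>{i\<in>{s+1..n}. h i = j}. p i)" for h :: "nat \<Rightarrow> nat" and j
  define Phi where "Phi h = (\<Sum>j\<in>{s+1..m}. (Y h j)^2)" for h
  have finG: "finite G" by (simp add: G_def finite_PiE)
  have "(\<lambda>i. if i \<in> {s+1..n} then s+1 else undefined) \<in> G" using sm by (auto simp: G_def)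
  hence neG: "G \<noteq> {}" by blast
  have "Min (Phi ` G) \<in> Phi ` G" using finG neG by (intro Min_in) auto
  then obtain g where gG: "g \<in> G" and gv: "Phi g = Min (Phi ` G)" by auto
  have gmin: "Phi g \<le> Phi g'" if "g' \<in> G" for g'
    unfolding gv using finG that by (intro Min_le) auto
  have Ynn: "Y h j \<ge> 0" for h j unfolding Y_def by (intro sum_nonneg pos) auto
  have Ysum: "(\<Sum>j\<in>{s+1..m}. Y g j) = TT n m p"
    unfolding Y_def TT_def s_def[symmetric] using gG
    by (intro sum.group) (auto simp: G_def)
  have "(\<Sum>i=1..s. p i) \<ge> 0" using sm mn by (intro sum_nonneg pos) auto
  hence TT1: "TT n m p \<le> 1" using R_props(5) by (simp add: s_def)
  define bin where "bin h j = {i\<in>{s+1..n}. h i = j}" for h :: "nat \<Rightarrow> nat" and j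
  have Ybin: "Y h j = (\<Sum>i\<in>bin h j. p i)" for h j by (simp add: Y_def bin_def)
  have finbin: "finite (bin h j)" for h j by (simp add: bin_def)
  have half: "\<exists>A\<in>{s+1..m}. (\<forall>j\<in>{s+1..m}. Y g j \<le> Y g A) \<and> Y g A > 0 \<and> (\<forall>B\<in>{s+1..m}. Y g A \<le> 2 * Y g B)"
    if k2: "2 \<le> k"
  proof -
    have "Max (Y g ` {s+1..m}) \<in> Y g ` {s+1..m}" using sm by (intro Max_in) auto
    then obtain A where A: "A \<in> {s+1..m}" "Y g A = Max (Y g ` {s+1..m})" by auto
    have Amax: "Y g j \<le> Y g A" if "j \<in> {s+1..m}" for j
      unfolding A(2) using that by (intro Max_ge) auto
    have TTgt: "real k * p (s+1) < TT n m p" using R_props(4) k2 by (simp add: k_def s_def)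
    have "TT n m p \<le> (\<Sum>j\<in>{s+1..m}. Y g A)" unfolding Ysum[symmetric] using Amax by (intro sum_mono) auto
    hence kYA: "TT n m p \<le> real k * Y g A" by (simp add: k_def)
    have ps0: "p (s+1) \<ge> 0" using sm mn by (intro pos) auto
    have TTpos: "TT n m p > 0" using TTgt ps0 k2 by (smt (verit) of_nat_0_le_iff zero_le_mult_iff)
    have YApos: "Y g A > 0" using kYA TTpos k2 by (smt (verit) mult_nonneg_nonpos of_nat_0_le_iff)
    have binp: "x \<in> bin h j \<Longrightarrow> p x \<ge> 0" for x h j using mn by (intro pos) (auto simp: bin_def)
    have binle: "x \<in> bin h j \<Longrightarrow> p x \<le> p (s+1)" for x h j by (intro mono) (auto simp: bin_def)
    have two: "\<exists>x1 x2. x1 \<in> bin g A \<and> x2 \<in> bin g A \<and> x1 \<noteq> x2 \<and> p x1 > 0 \<and> p x2 > 0"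
    proof (rule ccontr)
      assume no: "\<not> ?thesis"
      have "Y g A \<le> p (s+1)"
      proof (cases "\<exists>x\<in>bin g A. p x > 0")
        case True
        then obtain x0 where x0: "x0 \<in> bin g A" "p x0 > 0" by blast
        have z: "\<forall>x\<in>bin g A - {x0}. p x = 0"
        proof
          fix x assume x: "x \<in> bin g A - {x0}"
          have "\<not> p x > 0" using no x x0 by blast
          thus "p x = 0" using binp[of x g A] x by simp
        qed
        have "Y g A = p x0 + (\<Sum>x\<in>bin g A - {x0}. p x)" unfolding Ybin using x0 finbin by (simp add: sum.remove)
        also have "\<dots> = p x0" using z by simp
        finally show ?thesis using binle[OF x0(1)] by simp
      next
        case False
        hence "\<forall>x\<in>bin g A. p x = 0" using binp by (force simp: not_less intro: order_antisym)
        hence "Y g A = 0" unfolding Ybin by simp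
        then show ?thesis using ps0 by simp
      qed
      hence "real k * Y g A \<le> real k * p (s+1)" by (intro mult_left_mono) auto
      thus False using kYA TTgt by simp
    qed
    then obtain x1 x2 where xx: "x1 \<in> bin g A" "x2 \<in> bin g A" "x1 \<noteq> x2" "p x1 > 0" "p x2 > 0" by blast
    define xz where "xz = (if p x1 \<le> p x2 then x1 else x2)"
    define z where "z = p xz"
    have xzb: "xz \<in> bin g A" using xx by (simp add: xz_def)
    have zpos: "z > 0" using xx by (simp add: z_def xz_def)
    have "p x1 + p x2 = (\<Sum>x\<in>{x1,x2}. p x)" using xx by simp
    also have "\<dots> \<le> Y g A" unfolding Ybin using xx finbin binp by (intro sum_mono2) auto
    finally have z2: "2 * z \<le> Y g A" by (simp add: z_def xz_def)
    have "Y g A \<le> 2 * Y g B" if B: "B \<in> {s+1..m}" for B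
    proof (cases "B = A")
      case True then show ?thesis using YApos by simp
    next
      case False
      define g' where "g' = g(xz := B)"
      have xzn: "xz \<in> {s+1..n}" and gxz: "g xz = A" using xzb by (auto simp: bin_def)
      have g'G: "g' \<in> G" using gG xzn B by (auto simp: G_def g'_def PiE_iff extensional_def)
      have b1: "bin g' A = bin g A - {xz}" using False by (auto simp: bin_def g'_def)
      have b2: "bin g' B = insert xz (bin g B)" using xzn by (auto simp: bin_def g'_def)
      have xznB: "xz \<notin> bin g B" using gxz False by (auto simp: bin_def)
      have b3: "bin g' j = bin g j" if "j \<noteq> A" "j \<noteq> B" for j using that gxz by (auto simp: bin_def g'_def)
      have Y1: "Y g' A = Y g A - z" unfolding Ybin b1 z_def using xzb finbin by (simp add: sum_diff1)
      have Y2: "Y g' B = Y g B + z" unfolding Ybin b2 z_def using xznB finbin by simp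
      have Y3: "Y g' j = Y g j" if "j \<noteq> A" "j \<noteq> B" for j unfolding Ybin using b3[OF that] by simp
      have pw: "(Y g' j)^2 = (Y g j)^2 + ((if j = A then (Y g A - z)^2 - (Y g A)^2 else 0)
                 + (if j = B then (Y g B + z)^2 - (Y g B)^2 else 0))" for j
        using Y1 Y2 Y3 False by (cases "j = A"; cases "j = B") auto
      have "Phi g' = Phi g + ((Y g A - z)^2 - (Y g A)^2) + ((Y g B + z)^2 - (Y g B)^2)"
        unfolding Phi_def pw using A(1) B by (simp add: sum.distrib)
      moreover have "Phi g \<le> Phi g'" using gmin[OF g'G] .
      ultimately have "0 \<le> 2 * z * (z - Y g A + Y g B)" by (simp add: power2_eq_square algebra_simps)
      hence "0 \<le> z - Y g A + Y g B" using zpos by (simp add: zero_le_mult_iff)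
      then show ?thesis using z2 by simp
    qed
    then show ?thesis using A(1) Amax YApos by blast
  qed
  have bal: "Y g j \<le> 2 * Y g j'" if j: "j \<in> {s+1..m}" and j': "j' \<in> {s+1..m}" for j j'
  proof (cases "2 \<le> k")
    case True
    then obtain A where "A \<in> {s+1..m}" "\<forall>j\<in>{s+1..m}. Y g j \<le> Y g A" "\<forall>B\<in>{s+1..m}. Y g A \<le> 2 * Y g B"
      using half by blast
    then show ?thesis using j j' by fastforce
  next
    case False
    hence "j = j'" using j j' by (auto simp: k_def)
    then show ?thesis using Ynn[of g j] by simp
  qed
  have Ypos: "Y g j > 0" if j: "j \<in> {s+1..m}" and k2: "2 \<le> k" for j
  proof -
    obtain A where "A \<in> {s+1..m}" "Y g A > 0" "\<forall>B\<in>{s+1..m}. Y g A \<le> 2 * Y g B"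
      using half[OF k2] by blast
    then show ?thesis using j by fastforce
  qed
  define f where "f i = (if i \<in> {1..n} then (if i \<le> s then i else g i) else undefined)" for i
  have gmap: "\<And>i. i \<in> {s+1..n} \<Longrightarrow> g i \<in> {s+1..m}" using gG by (auto simp: G_def)
  have fib1: "{i\<in>{1..n}. f i = j} = {j}" if "j \<in> {1..s}" for j
    using that sm mn gmap by (auto simp: f_def) (metis atLeastAtMost_iff not_less_eq_eq)
  have fib2: "{i\<in>{1..n}. f i = j} = {i\<in>{s+1..n}. g i = j}" if "j \<in> {s+1..m}" for j
    using that sm mn gmap by (auto simp: f_def)
  have fS: "f \<in> surj_funs n m"
  proof -
    have fPi: "f \<in> {1..n} \<rightarrow>\<^sub>E {1..m}"
    proof (rule PiE_I)
      fix i assume i: "i \<in> {1..n}"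
      show "f i \<in> {1..m}"
      proof (cases "i \<le> s")
        case True then show ?thesis using i sm by (simp add: f_def)
      next
        case False then have "g i \<in> {s+1..m}" using gmap i by auto
        then show ?thesis using i False by (simp add: f_def)
      qed
    next
      fix i assume "i \<notin> {1..n}" then show "f i = undefined" unfolding f_def by (simp only: if_False)
    qed
    moreover have "f ` {1..n} = {1..m}"
    proof
      show "f ` {1..n} \<subseteq> {1..m}" using fPi by (auto simp: PiE_def Pi_def)
      show "{1..m} \<subseteq> f ` {1..n}"
      proof
        fix j assume j: "j \<in> {1..m}"
        show "j \<in> f ` {1..n}"
        proof (cases "j \<le> s")
          case True
          then have eq: "{i\<in>{1..n}. f i = j} = {j}" using j by (intro fib1) auto
          have "j \<in> {i\<in>{1..n}. f i = j}" by (subst eq) simp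
          hence jj: "j \<in> {1..n}" "f j = j" by auto
          show ?thesis using image_eqI[of j f j "{1..n}"] jj by simp
        next
          case False
          hence j2: "j \<in> {s+1..m}" using j by auto
          have "{i\<in>{s+1..n}. g i = j} \<noteq> {}"
          proof (cases "2 \<le> k")
            case True
            have yp: "Y g j > 0" using Ypos[OF j2 True] .
            show ?thesis
            proof
              assume e: "{i\<in>{s+1..n}. g i = j} = {}"
              have "Y g j = 0" unfolding Y_def e by simp
              thus False using yp by simp
            qed
          next
            case False
            hence "j = s + 1" using j2 by (auto simp: k_def)
            moreover have "g (s+1) \<in> {s+1..m}" using gmap sm mn by auto
            ultimately have "g (s+1) = j" using False j2 by (auto simp: k_def)
            moreover have "s + 1 \<in> {s+1..n}" using sm mn by auto
            ultimately show ?thesis by blast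
          qed
          then obtain i where "i \<in> {i\<in>{1..n}. f i = j}" using fib2[OF j2] by blast
          hence ii: "i \<in> {1..n}" "f i = j" by auto
          show ?thesis using image_eqI[of j f i "{1..n}"] ii by simp
        qed
      qed
    qed
    ultimately show ?thesis by (simp add: surj_funs_def)
  qed
  have "entropy {1..m} (img_dist n p f) = (\<Sum>j=1..s. phi (p j)) + (\<Sum>j=s+1..m. phi (Y g j))"
  proof -
    have "{1..m} = {1..s} \<union> {s+1..m}" using sm by auto
    hence "entropy {1..m} (img_dist n p f) = (\<Sum>j=1..s. phi (img_dist n p f j)) + (\<Sum>j=s+1..m. phi (img_dist n p f j))"
      by (simp add: entropy_phi sum.union_disjoint)
    also have "(\<Sum>j=1..s. phi (img_dist n p f j)) = (\<Sum>j=1..s. phi (p j))"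
    proof (intro sum.cong refl)
      fix j assume jj: "j \<in> {1..s}"
      show "phi (img_dist n p f j) = phi (p j)" unfolding img_dist_def fib1[OF jj] by simp
    qed
    also have "(\<Sum>j=s+1..m. phi (img_dist n p f j)) = (\<Sum>j=s+1..m. phi (Y g j))"
    proof (intro sum.cong refl)
      fix j assume jj: "j \<in> {s+1..m}"
      show "phi (img_dist n p f j) = phi (Y g j)" unfolding img_dist_def fib2[OF jj] Y_def by simp
    qed
    finally show ?thesis .
  qed
  moreover have "(\<Sum>j=s+1..m. phi (Y g j)) \<ge> real (m - s) * phi (tt n m p) - (1 - (1 + ln (ln 2)) / ln (2::real))"
  proof -
    have "(\<Sum>j=s+1..m. phi (Y g j)) \<ge> real (card {s+1..m}) * phi ((\<Sum>j=s+1..m. Y g j) / real (card {s+1..m}))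
           - (1 - (1 + ln (ln 2)) / ln (2::real)) * (\<Sum>j=s+1..m. Y g j)"
      using sm by (intro tail_bound Ynn bal) auto
    moreover have "card {s+1..m} = m - s" by simp
    moreover have al0: "0 \<le> 1 - (1 + ln (ln 2)) / ln (2::real)" using key[of 1] by simp
    moreover have "(1 - (1 + ln (ln 2)) / ln (2::real)) * TT n m p \<le> (1 - (1 + ln (ln 2)) / ln (2::real))"
      using al0 TT1 by (simp add: mult_left_le)
    ultimately show ?thesis using Ysum by (simp add: tt_def s_def)
  qed
  ultimately have "entropy {1..m} (img_dist n p f) \<ge> entropy {1..m} (R_vec n m p) - (1 - (1 + ln (ln 2)) / ln (2::real))"
    using HR_eq by (simp add: s_def)
  then show ?thesis using fS by blast
qed

end

lemma alpha_bound: "1 - (1 + ln (ln 2)) / ln (2::real) < 0.08608"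
proof -
  have L: "ln (2::real) \<in> {0.693147..0.693148}" by (rule ln2_bounds)
  have l0: "ln (2::real) > 0" by simp
  have "ln (0.693147::real) \<le> ln (ln 2)" using L by simp
  moreover have "ln (0.693147::real) = - ln (1/0.693147)" by (simp add: ln_div)
  ultimately have "ln (ln (2::real)) \<ge> - 0.366514" using lnx_upper by linarith
  moreover have "0.91392 * ln (2::real) \<le> 0.91392 * 0.693148" using L by simp
  ultimately have "0.91392 * ln (2::real) < 1 + ln (ln 2)" by simp
  hence "0.91392 < (1 + ln (ln 2)) / ln (2::real)" using l0 by (simp add: pos_less_divide_eq)
  thus ?thesis by simp
qed

lemma min_attained:
  fixes n m :: nat and p :: "nat \<Rightarrow> real"
  assumes m2: "2 \<le> m" and mn: "m < n"
  shows "\<exists>f\<in>surj_funs n m. entropy {1..m} (img_dist n p f) = entropy {1..m} (Q_vec n m p)"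
proof -
  define f where "f i = (if i \<in> {1..n} then (if i \<le> n - m + 1 then 1 else i - (n - m)) else undefined)" for i :: nat
  have fib1: "{i\<in>{1..n}. f i = 1} = {1..n-m+1}" using mn m2 by (auto simp: f_def)
  have fib2: "{i\<in>{1..n}. f i = j} = {n - m + j}" if "j \<in> {2..m}" for j
    using that mn m2 by (auto simp: f_def)
  have img: "img_dist n p f j = Q_vec n m p j" if j: "j \<in> {1..m}" for j
  proof (cases "j = 1")
    case True then show ?thesis unfolding img_dist_def True fib1 by (simp add: Q_vec_def)
  next
    case False
    hence j2: "j \<in> {2..m}" using j by auto
    show ?thesis unfolding img_dist_def fib2[OF j2] using False by (simp add: Q_vec_def)
  qed
  have fPi: "f \<in> {1..n} \<rightarrow>\<^sub>E {1..m}"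
  proof (rule PiE_I)
    fix i assume i: "i \<in> {1..n}"
    then show "f i \<in> {1..m}" using mn m2 by (auto simp: f_def)
  next
    fix i assume "i \<notin> {1..n}" then show "f i = undefined" unfolding f_def by (simp only: if_False)
  qed
  have "f ` {1..n} = {1..m}"
  proof
    show "f ` {1..n} \<subseteq> {1..m}" using fPi by (auto simp: PiE_def Pi_def)
    show "{1..m} \<subseteq> f ` {1..n}"
    proof
      fix j assume j: "j \<in> {1..m}"
      show "j \<in> f ` {1..n}"
      proof (cases "j = 1")
        case True
        have "f 1 = 1" "1 \<in> {1..n}" using mn by (auto simp: f_def)
        then show ?thesis using True by (metis image_eqI)
      next
        case False
        hence j2: "j \<in> {2..m}" using j by auto
        have "n - m + j \<in> {i\<in>{1..n}. f i = j}" unfolding fib2[OF j2] by simp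
        hence "n - m + j \<in> {1..n}" "f (n - m + j) = j" by auto
        then show ?thesis by (metis image_eqI)
      qed
    qed
  qed
  hence "f \<in> surj_funs n m" using fPi by (simp add: surj_funs_def)
  moreover have "entropy {1..m} (img_dist n p f) = entropy {1..m} (Q_vec n m p)"
    unfolding entropy_def using img by (intro arg_cong[where f = uminus] sum.cong) auto
  ultimately show ?thesis by blast
qed

theorem theorem1:
  fixes n m :: nat and p :: "nat \<Rightarrow> real"
  assumes "2 \<le> m" and "m < n"
    and "\<And>i. i \<in> {1..n} \<Longrightarrow> p i \<ge> 0"
    and "\<And>i j. 1 \<le> i \<Longrightarrow> i \<le> j \<Longrightarrow> j \<le> n \<Longrightarrow> p j \<le> p i"
    and "(\<Sum>i=1..n. p i) = 1"
  defines "\<alpha> \<equiv> 1 - (1 + ln (ln 2)) / ln (2::real)"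
  shows "Max ((\<lambda>f. entropy {1..m} (img_dist n p f)) ` surj_funs n m)
           \<in> {entropy {1..m} (R_vec n m p) - \<alpha> .. entropy {1..m} (R_vec n m p)}
     \<and> \<alpha> < 0.08608
     \<and> Min ((\<lambda>f. entropy {1..m} (img_dist n p f)) ` surj_funs n m)
           = entropy {1..m} (Q_vec n m p)"
  proof -
  define H where "H f = entropy {1..m} (img_dist n p f)" for f
  have finSF: "finite (surj_funs n m)"
    by (rule finite_subset[of _ "{1..n} \<rightarrow>\<^sub>E {1..m}"]) (auto simp: surj_funs_def finite_PiE)
  obtain f0 where f0: "f0 \<in> surj_funs n m"
    "entropy {1..m} (img_dist n p f0) \<ge> entropy {1..m} (R_vec n m p) - \<alpha>"
    using max_lower[OF assms(1-5)] unfolding \<alpha>_def by blast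
  have neSF: "surj_funs n m \<noteq> {}" using f0 by blast
  have ub: "H f \<le> entropy {1..m} (R_vec n m p)" if "f \<in> surj_funs n m" for f
    unfolding H_def by (rule max_upper[OF assms(1-5) that])
  have "Max (H ` surj_funs n m) \<in> H ` surj_funs n m" using finSF neSF by (intro Max_in) auto
  hence M1: "Max (H ` surj_funs n m) \<le> entropy {1..m} (R_vec n m p)" using ub by auto
  have "H f0 \<le> Max (H ` surj_funs n m)" using finSF f0(1) by (intro Max_ge) auto
  hence M2: "entropy {1..m} (R_vec n m p) - \<alpha> \<le> Max (H ` surj_funs n m)" using f0(2) by (simp add: H_def)
  obtain fq where fq: "fq \<in> surj_funs n m" "H fq = entropy {1..m} (Q_vec n m p)"
    using min_attained[OF assms(1-2), of p] unfolding H_def by blast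
  have "Min (H ` surj_funs n m) = entropy {1..m} (Q_vec n m p)"
  proof (rule Min_eqI)
    show "finite (H ` surj_funs n m)" using finSF by simp
    show "\<And>y. y \<in> H ` surj_funs n m \<Longrightarrow> entropy {1..m} (Q_vec n m p) \<le> y"
      using min_lower[OF assms(1-5)] unfolding H_def by auto
    show "entropy {1..m} (Q_vec n m p) \<in> H ` surj_funs n m" using fq by (metis image_eqI)
  qed
  moreover have "\<alpha> < 0.08608" unfolding \<alpha>_def by (rule alpha_bound)
  ultimately show ?thesis using M1 M2 unfolding H_def by auto
qed

end
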